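(* Let $\gamma$ be an even probability density on $\mathbb{R}$ positive near $0$ and $\mathcal{P}=\mathcal{P}^n_\gamma$ the corresponding sub-spherical family on $\mathbb{R}^n$, let $\delta\ge0$, and let $\eta$ be a $\delta$-regular potential. Then $\mathrm{risk}_\delta(\eta|\mathcal{P}^n_\gamma)\le\epsilon_\delta(\eta|\gamma)$, where $\epsilon_\delta(\eta|\gamma)=\int_{-\infty}^{\infty}e^{-\eta(\delta+s)}\gamma(s)\,ds$.
   Context: The sub-spherical family $\mathcal{P}^n_\gamma$ consists of all even probability densities $p$ on $\mathbb{R}^n$ such that $\int_{\{e^T\xi\ge t\}}p(\xi)d\xi\le\int_t^\infty\gamma(s)ds$ for all unit $e\in\mathbb{R}^n$ and $t\ge0$. A potential is an odd, nondecreasing Borel function $\eta:\mathbb{R}\to\mathbb{R}$; it is $\delta$-regular if $H_{\delta\eta}(s)=e^{-\eta(\delta-s)}+e^{-\eta(\delta+s)}$ is nondecreasing on $s\ge0$. For a family $\mathcal{P}$ of densities on $\mathbb{R}^n$, $\mathrm{risk}_\delta(\eta|\mathcal{P})$ is the smallest $\epsilon$ such that for all unit $e$ and all $p\in\mathcal{P}$: $\int e^{-\eta(\delta+e^T\xi)}p(\xi)d\xi\le\epsilon$ and $\int e^{\eta(e^T\xi-\delta)}p(\xi)d\xi\le\epsilon$. *)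

theory Defs
  imports "HOL-Analysis.Analysis"
begin

definition prob_density :: "('a::euclidean_space \<Rightarrow> real) \<Rightarrow> bool" where
  "prob_density p \<longleftrightarrow> p \<in> borel_measurable lborel \<and> (\<forall>x. 0 \<le> p x)
     \<and> (\<integral>\<^sup>+x. ennreal (p x) \<partial>lborel) = 1"

definition even_density :: "('a::euclidean_space \<Rightarrow> real) \<Rightarrow> bool" where
  "even_density p \<longleftrightarrow> prob_density p \<and> (\<forall>x. p (- x) = p x)"

text \<open>The sub-spherical family P^n_gamma; the dimension is the type 'a.\<close>
definition subspherical :: "(real \<Rightarrow> real) \<Rightarrow> ('a::euclidean_space \<Rightarrow> real) set" where
  "subspherical \<gamma> = {p. even_density p \<and>
     (\<forall>e t. norm e = 1 \<longrightarrow> 0 \<le> t \<longrightarrow>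
        (\<integral>\<^sup>+\<xi>. ennreal (p \<xi>) * indicator {\<xi>. t \<le> e \<bullet> \<xi>} \<xi> \<partial>lborel)
          \<le> (\<integral>\<^sup>+s. ennreal (\<gamma> s) * indicator {t..} s \<partial>lborel))}"

definition potential :: "(real \<Rightarrow> real) \<Rightarrow> bool" where
  "potential \<eta> \<longleftrightarrow> (\<forall>x. \<eta> (- x) = - \<eta> x) \<and> mono \<eta> \<and> \<eta> \<in> borel_measurable borel"

definition regular :: "real \<Rightarrow> (real \<Rightarrow> real) \<Rightarrow> bool" where
  "regular \<delta> \<eta> \<longleftrightarrow> mono_on {0..} (\<lambda>s. exp (- \<eta> (\<delta> - s)) + exp (- \<eta> (\<delta> + s)))"

text \<open>risk: the smallest epsilon bounding both integrals, i.e. their supremum (in [0,\<infinity>]).\<close>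
definition risk :: "real \<Rightarrow> (real \<Rightarrow> real) \<Rightarrow> ('a::euclidean_space \<Rightarrow> real) set \<Rightarrow> ennreal" where
  "risk \<delta> \<eta> P = (SUP ep \<in> {e. norm e = 1} \<times> P.
     max (\<integral>\<^sup>+\<xi>. ennreal (exp (- \<eta> (\<delta> + fst ep \<bullet> \<xi>)) * snd ep \<xi>) \<partial>lborel)
         (\<integral>\<^sup>+\<xi>. ennreal (exp (\<eta> (fst ep \<bullet> \<xi> - \<delta>)) * snd ep \<xi>) \<partial>lborel))"

definition eps :: "real \<Rightarrow> (real \<Rightarrow> real) \<Rightarrow> (real \<Rightarrow> real) \<Rightarrow> ennreal" where
  "eps \<delta> \<eta> \<gamma> = (\<integral>\<^sup>+s. ennreal (exp (- \<eta> (\<delta> + s)) * \<gamma> s) \<partial>lborel)"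

end

theory Submission
  imports Defs
begin

lemma lborel_distr_uminus_eucl: "distr lborel borel uminus = (lborel :: 'a::euclidean_space measure)"
proof -
  have "(lborel::'a measure) = density (distr lborel borel (\<lambda>x. 0 + (-1) *\<^sub>R x)) (\<lambda>_. \<bar>-1::real\<bar>^DIM('a))"
    by (rule lborel_affine) simp
  also have "\<dots> = distr lborel borel uminus"
    by (simp add: density_1 one_ennreal_def[symmetric])
  finally show ?thesis by simp
qed

lemma nn_integral_reflect_eucl:
  fixes h :: "'a::euclidean_space \<Rightarrow> ennreal"
  assumes "h \<in> borel_measurable borel"
  shows "(\<integral>\<^sup>+x. h (- x) \<partial>lborel) = (\<integral>\<^sup>+x. h x \<partial>lborel)"
proof -
  have "(\<integral>\<^sup>+x. h x \<partial>lborel) = (\<integral>\<^sup>+x. h x \<partial>distr lborel borel uminus)"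
    by (simp add: lborel_distr_uminus_eucl)
  also have "\<dots> = (\<integral>\<^sup>+x. h (- x) \<partial>lborel)"
    using assms by (subst nn_integral_distr) auto
  finally show ?thesis by simp
qed

lemma sym_abs_tail:
  fixes M :: "real measure"
  assumes sets: "sets M = sets borel"
  and sym: "\<And>A. A \<in> sets borel \<Longrightarrow> emeasure M (uminus -` A) = emeasure M A"
  and a: "0 < a"
  shows "emeasure M {x. a \<le> \<bar>x\<bar>} = 2 * emeasure M {a..}"
proof -
  have e2: "uminus -` {a..} = {..-a}" by auto
  have eq: "{x. a \<le> \<bar>x\<bar>} = {a..} \<union> {..-a}" by auto
  have d: "{a..} \<inter> {..-a} = {}" using a by auto
  have "emeasure M ({a..} \<union> {..-a}) = emeasure M {a..} + emeasure M {..-a}"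
    apply (rule plus_emeasure[symmetric])
    using sets d by simp_all
  also have "\<dots> = 2 * emeasure M {a..}" using sym[of "{a..}"] e2 by (simp add: mult_2)
  finally show ?thesis using eq by simp
qed

lemma closed_tail:
  fixes N G :: "real measure"
  assumes N: "emeasure N (space N) = 1" "sets N = sets borel"
  and G: "emeasure G (space G) = 1" "sets G = sets borel"
  and symN: "\<And>A. A \<in> sets borel \<Longrightarrow> emeasure N (uminus -` A) = emeasure N A"
  and symG: "\<And>A. A \<in> sets borel \<Longrightarrow> emeasure G (uminus -` A) = emeasure G A"
  and tail: "\<And>t. 0 \<le> t \<Longrightarrow> emeasure N {t..} \<le> emeasure G {t..}"
  and a: "0 \<le> a"
  shows "emeasure N {x. a \<le> \<bar>x\<bar>} \<le> emeasure G {x. a \<le> \<bar>x\<bar>}"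
proof (cases "a = 0")
  case True
  then have u: "{x::real. a \<le> \<bar>x\<bar>} = UNIV" by auto
  have "space N = UNIV" "space G = UNIV" using sets_eq_imp_space_eq[OF N(2)] sets_eq_imp_space_eq[OF G(2)] by simp_all
  then show ?thesis using N(1) G(1) u by simp
next
  case False
  then have "0 < a" using a by simp
  then have "emeasure N {x. a \<le> \<bar>x\<bar>} = 2 * emeasure N {a..}"
    "emeasure G {x. a \<le> \<bar>x\<bar>} = 2 * emeasure G {a..}"
    using sym_abs_tail[OF N(2) symN] sym_abs_tail[OF G(2) symG] by auto
  then show ?thesis
    using tail[OF a] by (simp add: mult_left_mono)
qed

lemma open_tail:
  fixes N G :: "real measure"
  assumes N: "sets N = sets borel"
  and G: "sets G = sets borel"
  and cl: "\<And>a. 0 \<le> a \<Longrightarrow> emeasure N {x. a \<le> \<bar>x\<bar>} \<le> emeasure G {x. a \<le> \<bar>x\<bar>}"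
  and a: "0 \<le> a"
  shows "emeasure N {x. a < \<bar>x\<bar>} \<le> emeasure G {x. a < \<bar>x\<bar>}"
proof -
  define B where "B n = {x::real. a + 1 / Suc n \<le> \<bar>x\<bar>}" for n :: nat
  have inc: "incseq B"
  proof (rule incseq_SucI)
    fix n
    have "1 / real (Suc (Suc n)) \<le> 1 / real (Suc n)"
      by (rule divide_left_mono) auto
    then show "B n \<subseteq> B (Suc n)" unfolding B_def by auto
  qed
  have un: "(\<Union>n. B n) = {x. a < \<bar>x\<bar>}"
  proof safe
    fix x assume "a < \<bar>x\<bar>"
    then have "0 < \<bar>x\<bar> - a" by simp
    then obtain n where n: "inverse (real (Suc n)) < \<bar>x\<bar> - a"
      using reals_Archimedean by blast
    then have "x \<in> B n" unfolding B_def by (simp add: inverse_eq_divide)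
    then show "x \<in> (\<Union>n. B n)" by blast
  next
    fix x n assume "x \<in> B n"
    then have "a + 1 / real (Suc n) \<le> \<bar>x\<bar>" by (simp only: B_def mem_Collect_eq)
    moreover have "0 < 1 / real (Suc n)" by simp
    ultimately show "a < \<bar>x\<bar>" by linarith
  qed
  have mB0: "B n \<in> sets borel" for n
  proof -
    have "{x \<in> space borel. a + 1 / Suc n \<le> \<bar>x::real\<bar>} \<in> sets borel" by measurable
    then show ?thesis unfolding B_def by simp
  qed
  then have mB: "range B \<subseteq> sets borel" by auto
  have "emeasure N {x. a < \<bar>x\<bar>} = emeasure N (\<Union>n. B n)" using un by simp
  also have "\<dots> = (SUP n. emeasure N (B n))"
    using SUP_emeasure_incseq[of B N, OF _ inc] mB N by simp
  also have "\<dots> \<le> (SUP n. emeasure G (B n))"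
  proof (rule SUP_mono)
    fix n
    have "0 \<le> a + 1 / real (Suc n)" using a by simp
    then show "\<exists>m\<in>UNIV. emeasure N (B n) \<le> emeasure G (B m)"
      using cl[of "a + 1 / real (Suc n)"] unfolding B_def by blast
  qed
  also have "\<dots> = emeasure G (\<Union>n. B n)"
    using SUP_emeasure_incseq[of B G, OF _ inc] mB G by simp
  also have "\<dots> = emeasure G {x. a < \<bar>x\<bar>}" using un by simp
  finally show ?thesis .
qed

lemma level_le:
  fixes N G :: "real measure" and F :: "real \<Rightarrow> real"
  assumes cl: "\<And>a. 0 \<le> a \<Longrightarrow> emeasure N {x. a \<le> \<bar>x\<bar>} \<le> emeasure G {x. a \<le> \<bar>x\<bar>}"
  and op: "\<And>a. 0 \<le> a \<Longrightarrow> emeasure N {x. a < \<bar>x\<bar>} \<le> emeasure G {x. a < \<bar>x\<bar>}"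
  and ev: "\<And>x. F (- x) = F x" and mo: "mono_on {0..} F"
  shows "emeasure N {x. 0 \<le> u \<and> u < F x} \<le> emeasure G {x. 0 \<le> u \<and> u < F x}"
proof (cases "0 \<le> u")
  case False
  then show ?thesis by simp
next
  case True
  define A where "A = {s. 0 \<le> s \<and> u < F s}"
  have Fa: "F x = F \<bar>x\<bar>" for x
  proof (cases "0 \<le> x")
    case True then show ?thesis by simp
  next
    case False then have "\<bar>x\<bar> = - x" by simp
    then show ?thesis using ev[of x] by simp
  qed
  have S: "{x. 0 \<le> u \<and> u < F x} = {x. \<bar>x\<bar> \<in> A}"
  proof -
    have "(0 \<le> u \<and> u < F x) \<longleftrightarrow> \<bar>x\<bar> \<in> A" for x
      using True Fa[of x] unfolding A_def by simp
    then show ?thesis by blast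
  qed
  show ?thesis
  proof (cases "A = {}")
    case True
    then show ?thesis unfolding S by simp
  next
    case ne: False
    define a where "a = Inf A"
    have bdd: "bdd_below A" unfolding A_def by (rule bdd_belowI[of _ 0]) simp
    have a0: "0 \<le> a" unfolding a_def using ne by (intro cInf_greatest) (simp_all add: A_def)
    have lo: "a \<le> s" if "s \<in> A" for s using cInf_lower[OF that bdd] unfolding a_def .
    have up: "s \<in> A" if "t \<in> A" "t \<le> s" for s t
    proof -
      have t: "0 \<le> t" "u < F t" using that(1) by (simp_all add: A_def)
      moreover have "F t \<le> F s" using mo that(2) t(1) by (intro mono_onD[OF mo]) simp_all
      ultimately show ?thesis using that(2) by (simp add: A_def)
    qed
    show ?thesis
    proof (cases "a \<in> A")
      case True
      have "\<bar>x\<bar> \<in> A \<longleftrightarrow> a \<le> \<bar>x\<bar>" for x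
        using True up lo by blast
      then have "{x. \<bar>x\<bar> \<in> A} = {x. a \<le> \<bar>x\<bar>}" by simp
      then show ?thesis unfolding S using cl[OF a0] by simp
    next
      case False
      have "\<bar>x\<bar> \<in> A \<longleftrightarrow> a < \<bar>x\<bar>" for x
      proof
        assume h: "\<bar>x\<bar> \<in> A"
        then have "a \<le> \<bar>x\<bar>" by (rule lo)
        moreover have "a \<noteq> \<bar>x\<bar>" using h False by metis
        ultimately show "a < \<bar>x\<bar>" by simp
      next
        assume "a < \<bar>x\<bar>"
        then obtain t where "t \<in> A" "t < \<bar>x\<bar>" using cInf_less_iff[OF ne bdd] unfolding a_def by blast
        then show "\<bar>x\<bar> \<in> A" using up by simp
      qed
      then have "{x. \<bar>x\<bar> \<in> A} = {x. a < \<bar>x\<bar>}" by simp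
      then show ?thesis unfolding S using op[OF a0] by simp
    qed
  qed
qed

lemma layer_cake:
  fixes N :: "real measure" and F :: "real \<Rightarrow> real"
  assumes N: "emeasure N (space N) = 1" "sets N = sets borel"
  and Fm: "F \<in> borel_measurable borel" and F0: "\<And>x. 0 \<le> F x"
  shows "(\<integral>\<^sup>+x. ennreal (F x) \<partial>N) = (\<integral>\<^sup>+u. emeasure N {x. 0 \<le> u \<and> u < F x} \<partial>lborel)"
proof -
  have fin: "finite_measure N" using N(1) by (intro finite_measureI) simp
  interpret P: pair_sigma_finite N lborel
    using fin by (intro pair_sigma_finite.intro finite_measure.axioms(1) lborel.sigma_finite_measure_axioms)
  have meas: "(\<lambda>(x, u). indicator {0..<F x} u :: ennreal) \<in> borel_measurable (N \<Otimes>\<^sub>M lborel)"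
  proof -
    have eq: "(\<lambda>(x, u). indicator {0..<F x} u :: ennreal) =
         (\<lambda>p::real\<times>real. if 0 \<le> snd p \<and> snd p < F (fst p) then 1 else 0)"
      by (auto simp: indicator_def fun_eq_iff)
    have m: "(\<lambda>p::real\<times>real. if 0 \<le> snd p \<and> snd p < F (fst p) then 1 else (0::ennreal)) \<in> borel_measurable (borel \<Otimes>\<^sub>M borel)"
      using Fm by measurable
    have s: "sets (N \<Otimes>\<^sub>M lborel) = sets (borel \<Otimes>\<^sub>M (borel :: real measure))"
      by (rule sets_pair_measure_cong[OF N(2) sets_lborel])
    show ?thesis unfolding eq using m measurable_cong_sets[OF s refl] by metis
  qed
  have "(\<integral>\<^sup>+x. ennreal (F x) \<partial>N) = (\<integral>\<^sup>+x. (\<integral>\<^sup>+u. indicator {0..<F x} u \<partial>lborel) \<partial>N)"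
    using F0 by (intro nn_integral_cong) simp
  also have "\<dots> = (\<integral>\<^sup>+u. (\<integral>\<^sup>+x. indicator {0..<F x} u \<partial>N) \<partial>lborel)"
    by (rule P.Fubini'[OF meas, symmetric])
  also have "\<dots> = (\<integral>\<^sup>+u. emeasure N {x. 0 \<le> u \<and> u < F x} \<partial>lborel)"
  proof (intro nn_integral_cong)
    fix u :: real
    have ms: "{x. 0 \<le> u \<and> u < F x} \<in> sets N"
    proof -
      have m1: "{x \<in> space borel. 0 \<le> u \<and> u < F x} \<in> sets borel" using Fm by measurable
      have "{x \<in> space borel. 0 \<le> u \<and> u < F x} = {x. 0 \<le> u \<and> u < F x}" by auto
      with m1 N(2) show ?thesis by metis
    qed
    have "(\<integral>\<^sup>+x. indicator {0..<F x} u \<partial>N) = (\<integral>\<^sup>+x. indicator {x. 0 \<le> u \<and> u < F x} x \<partial>N)"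
      by (intro nn_integral_cong) (auto simp: indicator_def)
    also have "\<dots> = emeasure N {x. 0 \<le> u \<and> u < F x}" by (rule nn_integral_indicator[OF ms])
    finally show "(\<integral>\<^sup>+x. indicator {0..<F x} u \<partial>N) = emeasure N {x. 0 \<le> u \<and> u < F x}" .
  qed
  finally show ?thesis .
qed

lemma dominance:
  fixes N G :: "real measure" and F :: "real \<Rightarrow> real"
  assumes N: "emeasure N (space N) = 1" "sets N = sets borel"
  and G: "emeasure G (space G) = 1" "sets G = sets borel"
  and symN: "\<And>A. A \<in> sets borel \<Longrightarrow> emeasure N (uminus -` A) = emeasure N A"
  and symG: "\<And>A. A \<in> sets borel \<Longrightarrow> emeasure G (uminus -` A) = emeasure G A"
  and tail: "\<And>t. 0 \<le> t \<Longrightarrow> emeasure N {t..} \<le> emeasure G {t..}"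
  and Fm: "F \<in> borel_measurable borel" and F0: "\<And>x. 0 \<le> F x"
  and ev: "\<And>x. F (- x) = F x" and mo: "mono_on {0..} F"
  shows "(\<integral>\<^sup>+x. ennreal (F x) \<partial>N) \<le> (\<integral>\<^sup>+x. ennreal (F x) \<partial>G)"
proof -
  have cl: "\<And>a. 0 \<le> a \<Longrightarrow> emeasure N {x. a \<le> \<bar>x\<bar>} \<le> emeasure G {x. a \<le> \<bar>x\<bar>}"
    by (rule closed_tail[OF N G symN symG tail])
  have op: "\<And>a. 0 \<le> a \<Longrightarrow> emeasure N {x. a < \<bar>x\<bar>} \<le> emeasure G {x. a < \<bar>x\<bar>}"
    by (rule open_tail[OF N(2) G(2) cl])
  show ?thesis
    unfolding layer_cake[OF N Fm F0] layer_cake[OF G Fm F0]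
    by (intro nn_integral_mono level_le[OF cl op ev mo])
qed

definition pushM :: "('a::euclidean_space \<Rightarrow> real) \<Rightarrow> 'a \<Rightarrow> real measure" where
  "pushM q e = distr (density lborel (\<lambda>\<xi>. ennreal (q \<xi>))) borel (\<lambda>\<xi>. e \<bullet> \<xi>)"

lemma pushM_sets: "sets (pushM q e) = sets borel"
  unfolding pushM_def by (rule sets_distr)

lemma pushM_space: "space (pushM q e) = UNIV"
  unfolding pushM_def by simp

lemma pushM_int:
  fixes q :: "'a::euclidean_space \<Rightarrow> real"
  assumes q: "q \<in> borel_measurable lborel" and g: "g \<in> borel_measurable borel"
  shows "(\<integral>\<^sup>+x. g x \<partial>pushM q e) = (\<integral>\<^sup>+\<xi>. ennreal (q \<xi>) * g (e \<bullet> \<xi>) \<partial>lborel)"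
proof -
  have "(\<integral>\<^sup>+x. g x \<partial>pushM q e) = (\<integral>\<^sup>+\<xi>. g (e \<bullet> \<xi>) \<partial>density lborel (\<lambda>\<xi>. ennreal (q \<xi>)))"
    unfolding pushM_def by (rule nn_integral_distr) (use g in simp_all)
  also have "\<dots> = (\<integral>\<^sup>+\<xi>. ennreal (q \<xi>) * g (e \<bullet> \<xi>) \<partial>lborel)"
    by (rule nn_integral_density) (use q g in simp_all)
  finally show ?thesis .
qed

lemma pushM_reflect:
  fixes q :: "'a::euclidean_space \<Rightarrow> real"
  assumes q: "q \<in> borel_measurable lborel" and qe: "\<And>x. q (- x) = q x"
  and g: "g \<in> borel_measurable borel"
  shows "(\<integral>\<^sup>+x. g (- x) \<partial>pushM q e) = (\<integral>\<^sup>+x. g x \<partial>pushM q e)"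
proof -
  have g': "(\<lambda>x. g (- x)) \<in> borel_measurable borel" using g by measurable
  have h: "(\<lambda>\<xi>. ennreal (q \<xi>) * g (e \<bullet> \<xi>)) \<in> borel_measurable borel" using q g by simp
  have "(\<integral>\<^sup>+x. g (- x) \<partial>pushM q e) = (\<integral>\<^sup>+\<xi>. ennreal (q \<xi>) * g (- (e \<bullet> \<xi>)) \<partial>lborel)"
    by (rule pushM_int[OF q g'])
  also have "\<dots> = (\<integral>\<^sup>+\<xi>. ennreal (q (- \<xi>)) * g (e \<bullet> (- \<xi>)) \<partial>lborel)"
    by (simp add: qe)
  also have "\<dots> = (\<integral>\<^sup>+\<xi>. ennreal (q \<xi>) * g (e \<bullet> \<xi>) \<partial>lborel)"
    by (rule nn_integral_reflect_eucl[OF h])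
  also have "\<dots> = (\<integral>\<^sup>+x. g x \<partial>pushM q e)"
    by (rule pushM_int[OF q g, symmetric])
  finally show ?thesis .
qed

lemma pushM_emeasure:
  fixes q :: "'a::euclidean_space \<Rightarrow> real"
  assumes q: "q \<in> borel_measurable lborel" and A: "A \<in> sets borel"
  shows "emeasure (pushM q e) A = (\<integral>\<^sup>+\<xi>. ennreal (q \<xi>) * indicator {\<xi>. e \<bullet> \<xi> \<in> A} \<xi> \<partial>lborel)"
proof -
  have A': "A \<in> sets (pushM q e)" using A pushM_sets by metis
  have "emeasure (pushM q e) A = (\<integral>\<^sup>+x. indicator A x \<partial>pushM q e)"
    by (rule nn_integral_indicator[OF A', symmetric])
  also have "\<dots> = (\<integral>\<^sup>+\<xi>. ennreal (q \<xi>) * indicator A (e \<bullet> \<xi>) \<partial>lborel)"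
    by (rule pushM_int[OF q]) (use A in simp)
  also have "\<dots> = (\<integral>\<^sup>+\<xi>. ennreal (q \<xi>) * indicator {\<xi>. e \<bullet> \<xi> \<in> A} \<xi> \<partial>lborel)"
    by (simp add: indicator_def)
  finally show ?thesis .
qed

lemma pushM_sym:
  fixes q :: "'a::euclidean_space \<Rightarrow> real"
  assumes q: "q \<in> borel_measurable lborel" and qe: "\<And>x. q (- x) = q x"
  and A: "A \<in> sets borel"
  shows "emeasure (pushM q e) (uminus -` A) = emeasure (pushM q e) A"
proof -
  have A': "A \<in> sets (pushM q e)" using A pushM_sets by metis
  have mA: "(indicator A :: real \<Rightarrow> ennreal) \<in> borel_measurable borel" using A by simp
  have B: "uminus -` A \<in> sets (pushM q e)"
  proof -
    have "uminus -` A \<inter> space borel \<in> sets borel"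
      by (rule measurable_sets[OF _ A]) simp
    then show ?thesis using pushM_sets by (metis space_borel Int_UNIV_right)
  qed
  have "emeasure (pushM q e) (uminus -` A) = (\<integral>\<^sup>+x. indicator (uminus -` A) x \<partial>pushM q e)"
    by (rule nn_integral_indicator[OF B, symmetric])
  also have "\<dots> = (\<integral>\<^sup>+x. indicator A (- x) \<partial>pushM q e)"
    by (simp add: indicator_def)
  also have "\<dots> = (\<integral>\<^sup>+x. indicator A x \<partial>pushM q e)"
    by (rule pushM_reflect[OF q qe mA])
  also have "\<dots> = emeasure (pushM q e) A"
    by (rule nn_integral_indicator[OF A'])
  finally show ?thesis .
qed

lemma pushM_total:
  fixes q :: "'a::euclidean_space \<Rightarrow> real"
  assumes q: "prob_density q"
  shows "emeasure (pushM q e) (space (pushM q e)) = 1"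
proof -
  have qm: "q \<in> borel_measurable lborel" using q unfolding prob_density_def by blast
  have U: "(UNIV::real set) \<in> sets borel" by (rule sets.top[of borel, unfolded space_borel])
  have "emeasure (pushM q e) (space (pushM q e)) = (\<integral>\<^sup>+\<xi>. ennreal (q \<xi>) * indicator {\<xi>. e \<bullet> \<xi> \<in> UNIV} \<xi> \<partial>lborel)"
    unfolding pushM_space by (rule pushM_emeasure[OF qm U])
  also have "\<dots> = (\<integral>\<^sup>+\<xi>. ennreal (q \<xi>) \<partial>lborel)" by simp
  also have "\<dots> = 1" using q unfolding prob_density_def by blast
  finally show ?thesis .
qed

theorem proposition2p13:
  fixes \<gamma> :: "real \<Rightarrow> real" and \<eta> :: "real \<Rightarrow> real" and \<delta> :: real
  assumes "even_density \<gamma>"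
    and "\<exists>r>0. \<forall>s. \<bar>s\<bar> < r \<longrightarrow> 0 < \<gamma> s"
    and "0 \<le> \<delta>"
    and "potential \<eta>"
    and "regular \<delta> \<eta>"
  shows "risk \<delta> \<eta> (subspherical \<gamma> :: ('a::euclidean_space \<Rightarrow> real) set) \<le> eps \<delta> \<eta> \<gamma>"
proof -
  have \<gamma>d: "prob_density \<gamma>" and \<gamma>e: "\<And>x. \<gamma> (- x) = \<gamma> x"
    using assms(1) unfolding even_density_def by auto
  have \<gamma>m: "\<gamma> \<in> borel_measurable lborel" and \<gamma>0: "\<And>x. 0 \<le> \<gamma> x"
    using \<gamma>d unfolding prob_density_def by auto
  have \<eta>odd: "\<And>x. \<eta> (- x) = - \<eta> x" and \<eta>m[measurable]: "\<eta> \<in> borel_measurable borel"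
    using assms(4) unfolding potential_def by auto
  define f where "f x = exp (- \<eta> (\<delta> + x))" for x
  have fm[measurable]: "f \<in> borel_measurable borel" unfolding f_def[abs_def] by measurable
  have f0: "\<And>x. 0 \<le> f x" unfolding f_def by simp
  define F where "F x = f x + f (- x)" for x
  have Fm: "F \<in> borel_measurable borel" unfolding F_def[abs_def] by measurable
  have F0: "\<And>x. 0 \<le> F x" unfolding F_def using f0 by (simp add: add_nonneg_nonneg)
  have Fev: "\<And>x. F (- x) = F x" unfolding F_def by simp
  have Fmo: "mono_on {0..} F"
  proof -
    have "F = (\<lambda>s. exp (- \<eta> (\<delta> - s)) + exp (- \<eta> (\<delta> + s)))"
      unfolding F_def f_def by (auto simp: fun_eq_iff)
    then show ?thesis using assms(5) unfolding regular_def by simp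
  qed
  define G where "G = pushM \<gamma> (1::real)"
  have fmE: "(\<lambda>x. ennreal (f x)) \<in> borel_measurable borel" by measurable
  have epsG: "eps \<delta> \<eta> \<gamma> = (\<integral>\<^sup>+x. ennreal (f x) \<partial>G)"
    unfolding G_def eps_def pushM_int[OF \<gamma>m fmE]
    by (intro nn_integral_cong) (simp add: f_def ennreal_mult'' mult.commute)
  have key: "(\<integral>\<^sup>+x. ennreal (f x) \<partial>pushM p e) \<le> eps \<delta> \<eta> \<gamma>"
    if e: "norm e = 1" and p: "p \<in> subspherical \<gamma>" for e :: 'a and p
  proof -
    have pd: "prob_density p" and pe: "\<And>x. p (- x) = p x"
      and tl: "\<And>t. 0 \<le> t \<Longrightarrow> (\<integral>\<^sup>+\<xi>. ennreal (p \<xi>) * indicator {\<xi>. t \<le> e \<bullet> \<xi>} \<xi> \<partial>lborel)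
          \<le> (\<integral>\<^sup>+s. ennreal (\<gamma> s) * indicator {t..} s \<partial>lborel)"
      using p e unfolding subspherical_def even_density_def by auto
    have pm: "p \<in> borel_measurable lborel" using pd unfolding prob_density_def by auto
    define N where "N = pushM p e"
    have tail: "emeasure N {t..} \<le> emeasure G {t..}" if t: "0 \<le> t" for t
    proof -
      have A: "{t..} \<in> sets (borel :: real measure)" by (rule atLeast_borel)
      have "emeasure N {t..} = (\<integral>\<^sup>+\<xi>. ennreal (p \<xi>) * indicator {\<xi>. e \<bullet> \<xi> \<in> {t..}} \<xi> \<partial>lborel)"
        unfolding N_def by (rule pushM_emeasure[OF pm A])
      also have "\<dots> = (\<integral>\<^sup>+\<xi>. ennreal (p \<xi>) * indicator {\<xi>. t \<le> e \<bullet> \<xi>} \<xi> \<partial>lborel)" by simp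
      also have "\<dots> \<le> (\<integral>\<^sup>+s. ennreal (\<gamma> s) * indicator {t..} s \<partial>lborel)" by (rule tl[OF t])
      also have "\<dots> = (\<integral>\<^sup>+s. ennreal (\<gamma> s) * indicator {s. 1 \<bullet> s \<in> {t..}} s \<partial>lborel)" by (simp add: atLeast_def)
      also have "\<dots> = emeasure G {t..}"
        unfolding G_def by (rule pushM_emeasure[OF \<gamma>m A, symmetric])
      finally show ?thesis .
    qed
    have dom: "(\<integral>\<^sup>+x. ennreal (F x) \<partial>N) \<le> (\<integral>\<^sup>+x. ennreal (F x) \<partial>G)"
      apply (rule dominance[OF _ _ _ _ _ _ tail Fm F0 Fev Fmo])
      unfolding N_def G_def
      apply (rule pushM_total[OF pd])
      apply (rule pushM_sets)
      apply (rule pushM_total[OF \<gamma>d])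
      apply (rule pushM_sets)
      apply (erule pushM_sym[OF pm pe])
      apply (erule pushM_sym[OF \<gamma>m \<gamma>e])
      apply assumption
      done
    have two: "(\<integral>\<^sup>+x. ennreal (F x) \<partial>pushM q c) = 2 * (\<integral>\<^sup>+x. ennreal (f x) \<partial>pushM q c)"
      if qm: "q \<in> borel_measurable lborel" and qe: "\<And>x. q (- x) = q x" for q :: "'b::euclidean_space \<Rightarrow> real" and c
    proof -
      have "(\<integral>\<^sup>+x. ennreal (F x) \<partial>pushM q c) = (\<integral>\<^sup>+x. ennreal (f x) + ennreal (f (- x)) \<partial>pushM q c)"
        unfolding F_def using f0 by (intro nn_integral_cong) (simp add: ennreal_plus)
      also have "\<dots> = (\<integral>\<^sup>+x. ennreal (f x) \<partial>pushM q c) + (\<integral>\<^sup>+x. ennreal (f (- x)) \<partial>pushM q c)"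
        by (rule nn_integral_add) (simp_all add: measurable_cong_sets[OF pushM_sets refl])
      also have "(\<integral>\<^sup>+x. ennreal (f (- x)) \<partial>pushM q c) = (\<integral>\<^sup>+x. ennreal (f x) \<partial>pushM q c)"
        by (rule pushM_reflect[OF qm qe fmE])
      finally show ?thesis by (simp add: mult_2)
    qed
    have "2 * (\<integral>\<^sup>+x. ennreal (f x) \<partial>N) \<le> 2 * (\<integral>\<^sup>+x. ennreal (f x) \<partial>G)"
      using dom unfolding N_def G_def two[OF pm pe] two[OF \<gamma>m \<gamma>e] .
    then have "(\<integral>\<^sup>+x. ennreal (f x) \<partial>N) \<le> (\<integral>\<^sup>+x. ennreal (f x) \<partial>G)"
      by (subst (asm) ennreal_mult_le_mult_iff) simp_all
    then show ?thesis unfolding N_def epsG .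
  qed
  show ?thesis
    unfolding risk_def
  proof (rule SUP_least)
    fix ep :: "'a \<times> ('a \<Rightarrow> real)"
    assume ep: "ep \<in> {e. norm e = 1} \<times> subspherical \<gamma>"
    obtain e p where epd: "ep = (e, p)" by (cases ep)
    have e: "e \<in> {e. norm e = 1}" and p: "p \<in> subspherical \<gamma>" using ep epd by auto
    have en: "norm e = 1" using e by simp
    have pd: "prob_density p" and pe: "\<And>x. p (- x) = p x"
      using p unfolding subspherical_def even_density_def by auto
    have pm: "p \<in> borel_measurable lborel" and p0: "\<And>x. 0 \<le> p x"
      using pd unfolding prob_density_def by auto
    have I1: "(\<integral>\<^sup>+\<xi>. ennreal (exp (- \<eta> (\<delta> + e \<bullet> \<xi>)) * p \<xi>) \<partial>lborel) = (\<integral>\<^sup>+x. ennreal (f x) \<partial>pushM p e)"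
      unfolding pushM_int[OF pm fmE]
      by (intro nn_integral_cong) (simp add: f_def ennreal_mult'' mult.commute)
    have fmE': "(\<lambda>x. ennreal (f (- x))) \<in> borel_measurable borel" by measurable
    have I2: "(\<integral>\<^sup>+\<xi>. ennreal (exp (\<eta> (e \<bullet> \<xi> - \<delta>)) * p \<xi>) \<partial>lborel) = (\<integral>\<^sup>+x. ennreal (f (- x)) \<partial>pushM p e)"
      unfolding pushM_int[OF pm fmE']
    proof (intro nn_integral_cong)
      fix \<xi>
      have "\<eta> (e \<bullet> \<xi> - \<delta>) = - \<eta> (\<delta> + - (e \<bullet> \<xi>))"
        using \<eta>odd[of "\<delta> + - (e \<bullet> \<xi>)"] by simp
      then show "ennreal (exp (\<eta> (e \<bullet> \<xi> - \<delta>)) * p \<xi>) = ennreal (p \<xi>) * ennreal (f (- (e \<bullet> \<xi>)))"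
        by (simp add: f_def ennreal_mult'' mult.commute)
    qed
    also have "\<dots> = (\<integral>\<^sup>+x. ennreal (f x) \<partial>pushM p e)"
      by (rule pushM_reflect[OF pm pe fmE])
    finally have I2': "(\<integral>\<^sup>+\<xi>. ennreal (exp (\<eta> (e \<bullet> \<xi> - \<delta>)) * p \<xi>) \<partial>lborel) = (\<integral>\<^sup>+x. ennreal (f x) \<partial>pushM p e)" .
    show "max (\<integral>\<^sup>+\<xi>. ennreal (exp (- \<eta> (\<delta> + fst ep \<bullet> \<xi>)) * snd ep \<xi>) \<partial>lborel)
              (\<integral>\<^sup>+\<xi>. ennreal (exp (\<eta> (fst ep \<bullet> \<xi> - \<delta>)) * snd ep \<xi>) \<partial>lborel) \<le> eps \<delta> \<eta> \<gamma>"
      using key[OF en p] I1 I2' epd by simp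
  qed
qed

end
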